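(* Let $m,n\ge1$ and let $r$ be an integer with $\frac{\min\{m,n\}+2}{2}<r<\min\{m,n\}$. Then $\mathrm{Hrk}_r^\circ(m,n)=2$.
   Context: Work over $\mathbb{C}$. For projective varieties $X,Y\subset\mathbb{P}^N$, $X\star Y$ is the Zariski closure of the set of entrywise products $p\star q=[p_0q_0:\dots:p_Nq_N]$ ($p\in X,q\in Y$, defined); $X^{\star1}=X$, $X^{\star s}=X\star X^{\star(s-1)}$. $X_r\subset\mathbb{P}(\mathrm{Mat}_{m,n})$ is the variety of $m\times n$ matrices of rank at most $r$, and $\mathrm{Hrk}_r^\circ(m,n)=\min\{s\mid X_r^{\star s}=\mathbb{P}(\mathrm{Mat}_{m,n})\}$. *)

theory Defs
  imports "HOL-Analysis.Analysis"
begin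

inductive_set poly_fun :: "(complex^'n^'m \<Rightarrow> complex) set" where
  pf_const: "(\<lambda>A. c) \<in> poly_fun"
| pf_coord: "(\<lambda>A. A $ i $ j) \<in> poly_fun"
| pf_add: "p \<in> poly_fun \<Longrightarrow> q \<in> poly_fun \<Longrightarrow> (\<lambda>A. p A + q A) \<in> poly_fun"
| pf_mult: "p \<in> poly_fun \<Longrightarrow> q \<in> poly_fun \<Longrightarrow> (\<lambda>A. p A * q A) \<in> poly_fun"

definition zariski_closure :: "(complex^'n^'m) set \<Rightarrow> (complex^'n^'m) set" where
  "zariski_closure S = {x. \<forall>p\<in>poly_fun. (\<forall>y\<in>S. p y = 0) \<longrightarrow> p x = 0}"

definition hadamard :: "complex^'n^'m \<Rightarrow> complex^'n^'m \<Rightarrow> complex^'n^'m" where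
  "hadamard A B = (\<chi> i j. A $ i $ j * B $ i $ j)"

text \<open>Projective varieties are represented by their affine cones; the affine cone of
  X \<star> Y is the Zariski closure of the entrywise products of points of the cones.\<close>
definition star :: "(complex^'n^'m) set \<Rightarrow> (complex^'n^'m) set \<Rightarrow> (complex^'n^'m) set" where
  "star X Y = zariski_closure {hadamard A B | A B. A \<in> X \<and> B \<in> Y}"

fun star_pow :: "(complex^'n^'m) set \<Rightarrow> nat \<Rightarrow> (complex^'n^'m) set" where
  "star_pow X 0 = X"
| "star_pow X (Suc 0) = X"
| "star_pow X (Suc s) = star X (star_pow X s)"

definition rank_le :: "nat \<Rightarrow> (complex^'n^'m) set" where
  "rank_le r = {A. rank A \<le> r}"

definition hrk :: "(complex^'n^'m) set \<Rightarrow> nat" where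
  "hrk X = (LEAST s. s \<ge> 1 \<and> star_pow X s = UNIV)"

end

theory Submission
  imports Defs
begin

lemma rank_le_card:
  fixes A :: "'a::field^'n^'m"
  assumes "finite S" "\<And>i. A$i \<in> vec.span S"
  shows "rank A \<le> card S"
  unfolding row_rank_def_gen
  by (rule vec.dim_le_card) (auto simp: rows_def row_def assms vec_lambda_eta)

lemma restrict_in_span:
  fixes x :: "'a::field^'n"
  shows "(\<chi> j. if j \<in> J then x $ j else 0) \<in> vec.span ((\<lambda>j. axis j 1) ` J)"
proof -
  have "(\<chi> j. if j \<in> J then x $ j else 0) = (\<Sum>j\<in>J. x $ j *s axis j 1)"
    by (auto simp: vec_eq_iff sum_component axis_def if_distrib cong: if_cong)
  also have "\<dots> \<in> vec.span ((\<lambda>j. axis j 1) ` J)"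
    by (intro vec.span_sum vec.span_scale vec.span_base) auto
  finally show ?thesis .
qed

lemma decomp_rows:
  fixes M :: "complex^'n^'m"
  assumes "1 \<le> r" "CARD('m) + 2 \<le> 2 * r" "r \<le> CARD('m)"
  shows "\<exists>A B. rank A \<le> r \<and> rank B \<le> r \<and> hadamard A B = M"
proof -
  have "r - 1 \<le> CARD('m)" using assms by linarith
  then obtain I :: "'m set" where I: "card I = r - 1"
    using obtain_subset_with_card_n[of "r-1" "UNIV::'m set"] by auto
  have cI: "card (- I) = CARD('m) - (r - 1)"
    using I by (simp add: Compl_eq_Diff_UNIV card_Diff_subset)
  define A :: "complex^'n^'m" where "A = (\<chi> i. if i \<in> I then M$i else 1)"
  define B :: "complex^'n^'m" where "B = (\<chi> i. if i \<in> I then 1 else M$i)"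
  have "rank A \<le> card ((\<lambda>i. M$i) ` I \<union> {1})"
    by (rule rank_le_card) (auto simp: A_def intro: vec.span_base)
  also have "\<dots> \<le> card ((\<lambda>i. M$i) ` I) + 1" by (simp add: card_insert_if)
  also have "\<dots> \<le> card I + 1" using card_image_le[of I "\<lambda>i. M$i"] by simp
  finally have rA: "rank A \<le> r" using I assms by linarith
  have "rank B \<le> card ((\<lambda>i. M$i) ` (- I) \<union> {1})"
    by (rule rank_le_card) (auto simp: B_def intro: vec.span_base)
  also have "\<dots> \<le> card ((\<lambda>i. M$i) ` (- I)) + 1" by (simp add: card_insert_if)
  also have "\<dots> \<le> card (- I) + 1" using card_image_le[of "- I" "\<lambda>i. M$i"] by simp
  finally have rB: "rank B \<le> r" using cI assms by linarith
  have "hadamard A B = M"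
    by (auto simp: vec_eq_iff hadamard_def A_def B_def)
  with rA rB show ?thesis by blast
qed

lemma rank_restrict:
  fixes M :: "complex^'n^'m"
  shows "rank (\<chi> i. \<chi> j. if j \<in> J then M$i$j else 1) \<le> card J + 1"
proof -
  define v :: "complex^'n" where "v = (\<chi> j. if j \<in> J then 0 else 1)"
  have "rank (\<chi> i. \<chi> j. if j \<in> J then M$i$j else 1) \<le> card ((\<lambda>j. axis j 1) ` J \<union> {v})"
  proof (rule rank_le_card)
    fix i
    have e: "(\<chi> i. \<chi> j. if j \<in> J then M$i$j else 1) $ i = (\<chi> j. if j \<in> J then M$i $ j else 0) + v"
      by (auto simp: vec_eq_iff v_def)
    show "(\<chi> i. \<chi> j. if j \<in> J then M$i$j else 1) $ i \<in> vec.span ((\<lambda>j. axis j 1) ` J \<union> {v})"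
      unfolding e
      by (intro vec.span_add vec.span_base[of v] 
           subsetD[OF vec.span_mono restrict_in_span]) auto
  qed simp
  also have "\<dots> \<le> card ((\<lambda>j. axis j (1::complex)) ` J) + 1" by (simp add: card_insert_if)
  also have "\<dots> \<le> card J + 1" using card_image_le[of J "\<lambda>j. axis j (1::complex)"] by simp
  finally show ?thesis .
qed

lemma decomp_cols:
  fixes M :: "complex^'n^'m"
  assumes "1 \<le> r" "CARD('n) + 2 \<le> 2 * r" "r \<le> CARD('n)"
  shows "\<exists>A B. rank A \<le> r \<and> rank B \<le> r \<and> hadamard A B = M"
proof -
  have "r - 1 \<le> CARD('n)" using assms by linarith
  then obtain J :: "'n set" where J: "card J = r - 1"
    using obtain_subset_with_card_n[of "r-1" "UNIV::'n set"] by auto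
  have cJ: "card (- J) = CARD('n) - (r - 1)"
    using J by (simp add: Compl_eq_Diff_UNIV card_Diff_subset)
  define A :: "complex^'n^'m" where "A = (\<chi> i. \<chi> j. if j \<in> J then M$i$j else 1)"
  define B :: "complex^'n^'m" where "B = (\<chi> i. \<chi> j. if j \<in> - J then M$i$j else 1)"
  have rA: "rank A \<le> r" using rank_restrict[of J M] J assms unfolding A_def by linarith
  have rB: "rank B \<le> r" using rank_restrict[of "- J" M] cJ assms unfolding B_def by linarith
  have "hadamard A B = M"
    by (auto simp: vec_eq_iff hadamard_def A_def B_def)
  with rA rB show ?thesis by blast
qed

lemma witness_rows:
  assumes "CARD('m) \<le> CARD('n)"
  shows "\<exists>D::complex^'n^'m. rank D \<ge> CARD('m)"
proof -
  obtain g :: "'m \<Rightarrow> 'n" where g: "inj g"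
    using assms card_le_inj[of "UNIV::'m set" "UNIV::'n set"] by auto
  define D :: "complex^'n^'m" where "D = (\<chi> i. axis (g i) 1)"
  have rows: "rows D = range (\<lambda>i. axis (g i) (1::complex))"
    by (auto simp: rows_def row_def D_def vec_lambda_eta)
  have sub: "range (\<lambda>i. axis (g i) (1::complex)) \<subseteq> cart_basis"
    by (auto simp: cart_basis_def)
  have ind: "vec.independent (range (\<lambda>i. axis (g i) (1::complex)))"
    using vec.independent_mono[OF independent_cart_basis sub] .
  have inj2: "inj (\<lambda>i. axis (g i) (1::complex))"
    using g by (auto simp: inj_def axis_eq_axis)
  have "rank D = card (range (\<lambda>i. axis (g i) (1::complex)))"
    unfolding row_rank_def_gen rows by (rule vec.dim_eq_card_independent[OF ind])
  also have "\<dots> = CARD('m)" using inj2 by (simp add: card_image)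
  finally show ?thesis by (intro exI[of _ D]) simp
qed

lemma witness_cols:
  assumes "CARD('n) \<le> CARD('m)"
  shows "\<exists>D::complex^'n^'m. rank D \<ge> CARD('n)"
proof -
  obtain h :: "'n \<Rightarrow> 'm" where h: "inj h"
    using assms card_le_inj[of "UNIV::'n set" "UNIV::'m set"] by auto
  define D :: "complex^'n^'m" where
    "D = (\<chi> i. if i \<in> range h then axis (inv h i) 1 else 0)"
  have sub: "cart_basis \<subseteq> rows D"
  proof
    fix x :: "complex^'n" assume "x \<in> cart_basis"
    then obtain j where x: "x = axis j 1" by (auto simp: cart_basis_def)
    have "row (h j) D = x" using h by (simp add: row_def D_def x vec_lambda_eta)
    then show "x \<in> rows D" by (auto simp: rows_def)
  qed
  have "card (cart_basis :: (complex^'n) set) \<le> vec.dim (rows D)"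
    by (rule vec.independent_card_le_dim[OF sub independent_cart_basis])
  then show ?thesis by (auto simp: card_cart_basis row_rank_def_gen)
qed

theorem mainTheorem14:
  fixes r :: nat
  assumes "real (min CARD('m) CARD('n)) + 2 < 2 * real r"
      and "r < min CARD('m) CARD('n)"
  shows "hrk (rank_le r :: (complex^'n^'m) set) = 2"
proof -
  let ?X = "rank_le r :: (complex^'n^'m) set"
  have dec: "\<exists>A B. rank A \<le> r \<and> rank B \<le> r \<and> hadamard A B = M" for M :: "complex^'n^'m"
  proof (cases "CARD('m) \<le> CARD('n)")
    case True
    then show ?thesis using assms by (intro decomp_rows) (auto simp: min_def)
  next
    case False
    then show ?thesis using assms by (intro decomp_cols) (auto simp: min_def)
  qed
  have wit: "\<exists>D::complex^'n^'m. rank D > r"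
  proof (cases "CARD('m) \<le> CARD('n)")
    case True
    then show ?thesis using assms witness_rows[OF True] by (auto simp: min_def) (meson order.strict_trans2)
  next
    case False
    then have F: "CARD('n) \<le> CARD('m)" by simp
    obtain D :: "complex^'n^'m" where "rank D \<ge> CARD('n)" using witness_cols[OF F] by blast
    moreover have "r < CARD('n)" using assms(2) F by (simp add: min_absorb2)
    ultimately show ?thesis by (intro exI[of _ D]) simp
  qed
  have X2: "star_pow ?X 2 = UNIV"
  proof -
    have "UNIV \<subseteq> {hadamard A B | A B. A \<in> ?X \<and> B \<in> ?X}"
    proof
      fix M :: "complex^'n^'m"
      obtain A B where "rank A \<le> r" "rank B \<le> r" "hadamard A B = M" using dec[of M] by blast
      then show "M \<in> {hadamard A B | A B. A \<in> ?X \<and> B \<in> ?X}"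
        unfolding rank_le_def by blast
    qed
    also have "\<dots> \<subseteq> star ?X ?X"
      unfolding star_def zariski_closure_def by blast
    finally show ?thesis by (simp add: numeral_2_eq_2 top_le)
  qed
  have X1: "star_pow ?X 1 \<noteq> UNIV"
    using wit by (auto simp: rank_le_def) (metis UNIV_I mem_Collect_eq not_le)
  show ?thesis
    unfolding hrk_def
  proof (rule Least_equality)
    show "1 \<le> (2::nat) \<and> star_pow ?X 2 = UNIV" using X2 by simp
  next
    fix y :: nat assume "1 \<le> y \<and> star_pow ?X y = UNIV"
    with X1 show "2 \<le> y" by (cases "y = 1") auto
  qed
qed

end
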